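(* Fix $\epsilon\in(0,1)$, $d\ge1$, and let $f$ be the binary-tree function of depth $d$ with all $p_i=\frac{1+\epsilon}{2}$; let $L=2^d$. For a non-adaptive strategy $S$ (a permutation of the $n$ edges) and input $x$, let $\mathrm{cost}^L(f,x,S)$ be the number of leaf-edge tests performed by $S$ on $x$ before $f(x)$ is determined. Then: (i) there exists a leaf-last non-adaptive strategy that minimizes $\mathbb{E}[\mathrm{cost}^L(f,x,S)\mid f(x)=1]$ over all non-adaptive strategies $S$; and (ii) for every leaf-last non-adaptive strategy $S$ attaining this minimum and every $\ell\in[L-1]$, $q_\ell(S)\ge q_{\ell+1}(S)$, where $q_\ell(S)$ denotes the probability, conditioned on $f(x)=1$, that the $\ell$-th leaf edge tested by $S$ is the first leaf edge in $S$'s order whose leaf is alive.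
   Context: Binary-tree function of depth $d$: take the complete binary tree of depth $d$ (root at depth $0$, $2^d$ leaves at depth $d$); it has $n=2^{d+1}-2$ edges, numbered $1,\dots,n$, and variable $x_i$ is associated with edge $i$. The input $x\in\{0,1\}^n$ has independent coordinates with $\Pr(x_i=1)=p_i$. A leaf is alive if $x_i=1$ for every edge $i$ on the root-to-leaf path; $f(x)=1$ iff at least one leaf is alive. A non-adaptive strategy is a fixed permutation of the edges, tested in that order until $f(x)$ is determined (i.e. until $f(x')=f(x)$ for all $x'$ agreeing with $x$ on the tested edges). Leaf edges are the edges joining a leaf to its parent; the others are internal edges. A non-adaptive strategy is leaf-last if all internal edges precede all leaf edges in its permutation. *)

theory Defs
  imports Complex_Main "HOL-Library.FuncSet"
begin

(* Complete binary tree of depth d in heap numbering: nodes 1 .. 2^(d+1)-1, root 1,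
   children of v are 2v and 2v+1.  Each edge is identified with its lower (child)
   endpoint, so the edges are the nodes 2 .. 2^(d+1)-1 (n = 2^(d+1)-2 of them). *)
definition bt_edges :: "nat \<Rightarrow> nat set" where
  "bt_edges d = {2..<2^(d+1)}"

(* leaves (depth d); the leaf edge of leaf v is identified with v itself *)
definition bt_leaves :: "nat \<Rightarrow> nat set" where
  "bt_leaves d = {2^d..<2^(d+1)}"

definition bt_inputs :: "nat \<Rightarrow> (nat \<Rightarrow> bool) set" where
  "bt_inputs d = PiE (bt_edges d) (\<lambda>_. UNIV)"

(* leaf v is alive iff all edges on the root-to-v path (nodes v div 2^k, k<d) are 1 *)
definition bt_alive :: "nat \<Rightarrow> (nat \<Rightarrow> bool) \<Rightarrow> nat \<Rightarrow> bool" where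
  "bt_alive d x v = (\<forall>k<d. x (v div 2^k))"

definition bt_f :: "nat \<Rightarrow> (nat \<Rightarrow> bool) \<Rightarrow> bool" where
  "bt_f d x = (\<exists>v\<in>bt_leaves d. bt_alive d x v)"

definition bt_weight :: "nat \<Rightarrow> real \<Rightarrow> (nat \<Rightarrow> bool) \<Rightarrow> real" where
  "bt_weight d p x = (\<Prod>e\<in>bt_edges d. if x e then p else 1 - p)"

definition bt_determined :: "nat \<Rightarrow> nat set \<Rightarrow> (nat \<Rightarrow> bool) \<Rightarrow> bool" where
  "bt_determined d T x = (\<forall>x'\<in>bt_inputs d. (\<forall>e\<in>T. x' e = x e) \<longrightarrow> bt_f d x' = bt_f d x)"

definition bt_strategy :: "nat \<Rightarrow> nat list \<Rightarrow> bool" where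
  "bt_strategy d S = (distinct S \<and> set S = bt_edges d)"

definition bt_num_tests :: "nat \<Rightarrow> nat list \<Rightarrow> (nat \<Rightarrow> bool) \<Rightarrow> nat" where
  "bt_num_tests d S x = (LEAST k. bt_determined d (set (take k S)) x)"

definition bt_costL :: "nat \<Rightarrow> nat list \<Rightarrow> (nat \<Rightarrow> bool) \<Rightarrow> nat" where
  "bt_costL d S x = length (filter (\<lambda>e. e \<in> bt_leaves d) (take (bt_num_tests d S x) S))"

definition bt_leaf_last :: "nat \<Rightarrow> nat list \<Rightarrow> bool" where
  "bt_leaf_last d S =
     (\<forall>i j. i < j \<and> j < length S \<and> S ! i \<in> bt_leaves d \<longrightarrow> S ! j \<in> bt_leaves d)"

definition bt_cond_cost :: "nat \<Rightarrow> real \<Rightarrow> nat list \<Rightarrow> real" where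
  "bt_cond_cost d p S =
     (\<Sum>x\<in>{x\<in>bt_inputs d. bt_f d x}. bt_weight d p x * real (bt_costL d S x))
     / (\<Sum>x\<in>{x\<in>bt_inputs d. bt_f d x}. bt_weight d p x)"

(* the l-th (1-indexed) leaf edge in S's order is the first one whose leaf is alive *)
definition bt_first_alive :: "nat \<Rightarrow> nat list \<Rightarrow> (nat \<Rightarrow> bool) \<Rightarrow> nat \<Rightarrow> bool" where
  "bt_first_alive d S x l =
     (let Ls = filter (\<lambda>e. e \<in> bt_leaves d) S in
        bt_alive d x (Ls ! (l - 1)) \<and> (\<forall>j < l - 1. \<not> bt_alive d x (Ls ! j)))"

definition bt_q :: "nat \<Rightarrow> real \<Rightarrow> nat list \<Rightarrow> nat \<Rightarrow> real" where
  "bt_q d p S l =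
     (\<Sum>x\<in>{x\<in>bt_inputs d. bt_f d x \<and> bt_first_alive d S x l}. bt_weight d p x)
     / (\<Sum>x\<in>{x\<in>bt_inputs d. bt_f d x}. bt_weight d p x)"

end

theory Submission
  imports Defs
begin


lemma path_edge:
  assumes "v \<in> bt_leaves d" "k < d"
  shows "v div 2^k \<in> bt_edges d"
proof -
  have v1: "2^d \<le> v" "v < 2^(d+1)" using assms(1) by (auto simp: bt_leaves_def)
  have "(2::nat)^d div 2^k \<le> v div 2^k" using v1 div_le_mono by blast
  moreover have "(2::nat)^d div 2^k = 2^(d-k)" using assms(2) by (simp add: power_diff)
  moreover have "(2::nat) \<le> 2^(d-k)" using assms(2)
    by (metis One_nat_def Suc_leI power_increasing power_one_right zero_less_diff one_le_numeral)
  moreover have "v div 2^k \<le> v" by simp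
  ultimately have "2 \<le> v div 2^k" "v div 2^k < 2^(d+1)" using v1 by linarith+
  then show ?thesis by (auto simp: bt_edges_def)
qed

lemma path_internal:
  assumes "v \<in> bt_leaves d" "0 < k"
  shows "v div 2^k \<notin> bt_leaves d"
proof -
  have v1: "v < 2 * 2^d" using assms(1) by (auto simp: bt_leaves_def)
  have "(2::nat) \<le> 2^k" using assms(2)
    by (metis One_nat_def Suc_leI power_increasing power_one_right one_le_numeral)
  then have "v div 2^k \<le> v div 2" by (rule div_le_mono2[rotated]) simp
  moreover have "v div 2 < 2^d" using v1 by simp
  ultimately show ?thesis by (auto simp: bt_leaves_def)
qed

lemma leaves_sub: "d \<ge> 1 \<Longrightarrow> bt_leaves d \<subseteq> bt_edges d"
proof -
  assume "d \<ge> 1"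
  then have "(2::nat) \<le> 2^d"
    by (metis power_increasing power_one_right one_le_numeral)
  then show ?thesis by (auto simp: bt_leaves_def bt_edges_def)
qed

lemma determined_all: "x \<in> bt_inputs d \<Longrightarrow> bt_determined d (bt_edges d) x"
  unfolding bt_determined_def
proof (intro ballI impI)
  fix x' assume x: "x \<in> bt_inputs d" and x': "x' \<in> bt_inputs d" and ag: "\<forall>e\<in>bt_edges d. x' e = x e"
  have "x' = x"
  proof
    fix e show "x' e = x e"
    proof (cases "e \<in> bt_edges d")
      case True then show ?thesis using ag by blast
    next
      case False then show ?thesis using x x' unfolding bt_inputs_def by (metis PiE_arb)
    qed
  qed
  then show "bt_f d x' = bt_f d x" by simp
qed

lemma num_tests_det:
  assumes "bt_strategy d S" "x \<in> bt_inputs d"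
  shows "bt_determined d (set (take (bt_num_tests d S x) S)) x"
  unfolding bt_num_tests_def
proof (rule LeastI[of _ "length S"])
  have "set (take (length S) S) = bt_edges d" using assms(1) by (simp add: bt_strategy_def)
  then show "bt_determined d (set (take (length S) S)) x" using determined_all[OF assms(2)] by simp
qed

definition fa :: "nat \<Rightarrow> (nat \<Rightarrow> bool) \<Rightarrow> nat list \<Rightarrow> nat" where
  "fa d x M = length (takeWhile (\<lambda>v. \<not> bt_alive d x v) M)"

lemma costL_ge:
  assumes S: "bt_strategy d S" and x: "x \<in> bt_inputs d" and f: "bt_f d x" and d: "d \<ge> 1"
  shows "fa d x (filter (\<lambda>e. e \<in> bt_leaves d) S) + 1 \<le> bt_costL d S x"
proof -
  define k where "k = bt_num_tests d S x"
  define T where "T = set (take k S)"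
  have det: "bt_determined d T x" using num_tests_det[OF S x] by (simp add: k_def T_def)
  have TE: "T \<subseteq> bt_edges d" using S by (auto simp: T_def bt_strategy_def dest: in_set_takeD)
  have "\<exists>v\<in>T. v \<in> bt_leaves d \<and> bt_alive d x v"
  proof (rule ccontr)
    assume nv: "\<not> (\<exists>v\<in>T. v \<in> bt_leaves d \<and> bt_alive d x v)"
    define x' where "x' = (\<lambda>e. if e \<in> bt_edges d then x e \<and> (e \<in> T \<or> e \<notin> bt_leaves d) else undefined)"
    have x'in: "x' \<in> bt_inputs d" unfolding x'_def bt_inputs_def by (auto simp: PiE_iff extensional_def)
    have agree: "\<forall>e\<in>T. x' e = x e" using TE by (auto simp: x'_def)
    have "\<not> bt_f d x'"
    proof
      assume "bt_f d x'"
      then obtain v where v: "v \<in> bt_leaves d" "bt_alive d x' v" by (auto simp: bt_f_def)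
      have "x' (v div 2^0)" using v d by (auto simp: bt_alive_def)
      then have vT: "v \<in> T" using v(1) leaves_sub[OF d] by (auto simp: x'_def split: if_splits)
      have "bt_alive d x v" unfolding bt_alive_def
      proof (intro allI impI)
        fix k assume "k < d"
        then have "x' (v div 2^k)" "v div 2^k \<in> bt_edges d" using v path_edge by (auto simp: bt_alive_def)
        then show "x (v div 2^k)" by (auto simp: x'_def)
      qed
      then show False using nv vT v(1) by blast
    qed
    with det x'in agree f show False by (auto simp: bt_determined_def)
  qed
  then obtain v where v: "v \<in> T" "v \<in> bt_leaves d" "bt_alive d x v" by blast
  define P where "P = (\<lambda>e. e \<in> bt_leaves d)"
  define Ls where "Ls = filter P S"
  define Lk where "Lk = filter P (take k S)"
  have "Ls = Lk @ filter P (drop k S)" unfolding Ls_def Lk_def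
    by (metis append_take_drop_id filter_append)
  then have pre: "Lk = take (length Lk) Ls" by simp
  have vLk: "v \<in> set Lk" using v by (auto simp: Lk_def T_def P_def)
  have "fa d x Ls < length Lk"
  proof (rule ccontr)
    assume "\<not> ?thesis"
    then have le: "length Lk \<le> fa d x Ls" by simp
    have "Lk = take (length Lk) (takeWhile (\<lambda>v. \<not> bt_alive d x v) Ls)"
      using pre le takeWhile_eq_take[of "\<lambda>v. \<not> bt_alive d x v" Ls]
      by (metis fa_def min.absorb1 take_take)
    then have "set Lk \<subseteq> set (takeWhile (\<lambda>v. \<not> bt_alive d x v) Ls)"
      by (metis set_take_subset)
    then show False using vLk v(3) by (auto dest: set_takeWhileD)
  qed
  then show ?thesis by (simp add: bt_costL_def Ls_def Lk_def P_def k_def)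
qed



lemma filter_take_len: "length (filter P (take a xs)) \<le> length (filter P xs)"
proof -
  have "filter P xs = filter P (take a xs) @ filter P (drop a xs)"
    by (metis append_take_drop_id filter_append)
  then show ?thesis by (metis le_add1 length_append)
qed

lemma costL_ll:
  assumes S: "bt_strategy d S" "S = Is @ Ls" and Is: "set Is = bt_edges d - bt_leaves d"
    and Ls: "set Ls \<subseteq> bt_leaves d" and x: "x \<in> bt_inputs d" and f: "bt_f d x" and d: "d \<ge> 1"
  shows "bt_costL d S x = fa d x Ls + 1"
proof -
  define P where "P = (\<lambda>e. e \<in> bt_leaves d)"
  define Q where "Q = (\<lambda>v. \<not> bt_alive d x v)"
  have fIs: "filter P Is = []" using Is by (auto simp: P_def filter_empty_conv)
  have fLs: "filter P Ls = Ls" using Ls by (auto simp: P_def filter_id_conv)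
  have filt: "filter P S = Ls" using S(2) fIs fLs by simp
  have ge: "fa d x Ls + 1 \<le> bt_costL d S x" using costL_ge[OF S(1) x f d] filt by (simp add: P_def)
  define m where "m = fa d x Ls"
  obtain v where v: "v \<in> bt_leaves d" "bt_alive d x v" using f by (auto simp: bt_f_def)
  have "v \<in> set S" using v(1) leaves_sub[OF d] S(1) by (auto simp: bt_strategy_def)
  then have vLs: "v \<in> set Ls" using S(2) Is v(1) by auto
  have mlt: "m < length Ls"
  proof (rule ccontr)
    assume "\<not> ?thesis"
    then have "m = length Ls" using length_takeWhile_le[of Q Ls] by (simp add: m_def fa_def Q_def)
    then have "takeWhile Q Ls = Ls" using takeWhile_eq_take[of Q Ls]
      by (simp add: m_def fa_def Q_def)
    then have "Q v" using vLs by (metis set_takeWhileD)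
    then show False using v by (simp add: Q_def)
  qed
  define u where "u = Ls ! m"
  have ualive: "bt_alive d x u" using nth_length_takeWhile[of Q Ls] mlt
    by (simp add: u_def m_def fa_def Q_def)
  have uL: "u \<in> bt_leaves d" using Ls mlt by (auto simp: u_def)
  define k0 where "k0 = length Is + (m + 1)"
  have tk: "take k0 S = Is @ take (m+1) Ls" using S(2) by (simp add: k0_def)
  have "take (m+1) Ls = take m Ls @ [u]" using mlt by (simp add: u_def take_Suc_conv_app_nth)
  then have uT: "u \<in> set (take k0 S)" using tk by simp
  have IsT: "set Is \<subseteq> set (take k0 S)" using tk by simp
  have det: "bt_determined d (set (take k0 S)) x"
    unfolding bt_determined_def
  proof (intro ballI impI)
    fix x' assume x': "x' \<in> bt_inputs d" and ag: "\<forall>e\<in>set (take k0 S). x' e = x e"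
    have "bt_alive d x' u" unfolding bt_alive_def
    proof (intro allI impI)
      fix k assume k: "k < d"
      have xu: "x (u div 2^k)" using ualive k by (simp add: bt_alive_def)
      show "x' (u div 2^k)"
      proof (cases "k = 0")
        case True then show ?thesis using xu ag uT by simp
      next
        case False
        then have "u div 2^k \<in> set Is" using Is path_edge[OF uL k] path_internal[OF uL] by auto
        then show ?thesis using xu ag IsT by auto
      qed
    qed
    then have "bt_f d x'" using uL by (auto simp: bt_f_def)
    then show "bt_f d x' = bt_f d x" using f by simp
  qed
  have nt: "bt_num_tests d S x \<le> k0" unfolding bt_num_tests_def by (rule Least_le) (rule det)
  have "take (bt_num_tests d S x) S = take (bt_num_tests d S x) (take k0 S)"
    using nt by (simp add: min.absorb1)
  then have "bt_costL d S x \<le> length (filter P (take k0 S))"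
    unfolding bt_costL_def P_def by (metis filter_take_len)
  also have "filter P (take k0 S) = take (m+1) Ls"
  proof -
    have "filter P (take (m+1) Ls) = take (m+1) Ls"
      using fLs by (metis filter_id_conv in_set_takeD)
    then show ?thesis using tk fIs by simp
  qed
  finally show ?thesis using ge mlt by (simp add: m_def)
qed



lemma leaf_last_tail: "bt_leaf_last d (a # S) \<Longrightarrow> bt_leaf_last d S"
  unfolding bt_leaf_last_def
proof (intro allI impI)
  fix i j assume h: "\<forall>i j. i < j \<and> j < length (a # S) \<and> (a # S) ! i \<in> bt_leaves d \<longrightarrow> (a # S) ! j \<in> bt_leaves d"
    and ij: "i < j \<and> j < length S \<and> S ! i \<in> bt_leaves d"
  have "Suc i < Suc j \<and> Suc j < length (a # S) \<and> (a # S) ! Suc i \<in> bt_leaves d" using ij by simp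
  then have "(a # S) ! Suc j \<in> bt_leaves d" using h by blast
  then show "S ! j \<in> bt_leaves d" by simp
qed

lemma leaf_last_decomp:
  "bt_leaf_last d S \<Longrightarrow> S = filter (\<lambda>e. e \<notin> bt_leaves d) S @ filter (\<lambda>e. e \<in> bt_leaves d) S"
proof (induction S)
  case Nil then show ?case by simp
next
  case (Cons a S)
  have IH: "S = filter (\<lambda>e. e \<notin> bt_leaves d) S @ filter (\<lambda>e. e \<in> bt_leaves d) S"
    using Cons leaf_last_tail by blast
  show ?case
  proof (cases "a \<in> bt_leaves d")
    case True
    have all: "\<forall>y\<in>set S. y \<in> bt_leaves d"
    proof
      fix y assume "y \<in> set S"
      then obtain j where j: "j < length S" "S ! j = y" by (auto simp: in_set_conv_nth)
      have "0 < Suc j \<and> Suc j < length (a # S) \<and> (a # S) ! 0 \<in> bt_leaves d" using j True by simp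
      then have "(a # S) ! Suc j \<in> bt_leaves d" using Cons.prems unfolding bt_leaf_last_def by blast
      then show "y \<in> bt_leaves d" using j by simp
    qed
    then have "filter (\<lambda>e. e \<notin> bt_leaves d) S = []" "filter (\<lambda>e. e \<in> bt_leaves d) S = S"
      by (auto simp: filter_empty_conv filter_id_conv)
    then show ?thesis using True by simp
  next
    case False
    then show ?thesis using IH by simp
  qed
qed

lemma leaf_last_app:
  assumes "set Is \<inter> bt_leaves d = {}" "set Ls \<subseteq> bt_leaves d"
  shows "bt_leaf_last d (Is @ Ls)"
  unfolding bt_leaf_last_def
proof (intro allI impI)
  fix i j assume ij: "i < j \<and> j < length (Is @ Ls) \<and> (Is @ Ls) ! i \<in> bt_leaves d"
  have "\<not> i < length Is"
  proof
    assume "i < length Is"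
    then have "(Is @ Ls) ! i \<in> set Is" by (simp add: nth_append)
    then show False using ij assms(1) by blast
  qed
  then have "\<not> j < length Is" using ij by simp
  then have "(Is @ Ls) ! j = Ls ! (j - length Is)" "j - length Is < length Ls" using ij
    by (auto simp: nth_append)
  then show "(Is @ Ls) ! j \<in> bt_leaves d" using assms(2) by (metis nth_mem subsetD)
qed

lemma swap_tw:
  fixes Q :: "'a \<Rightarrow> bool"
  shows "real (length (takeWhile Q (P @ b # a # R))) =
     real (length (takeWhile Q (P @ a # b # R)))
     + (if length (takeWhile Q (P @ a # b # R)) = length P \<and> Q b then 1 else 0)
     - (if length (takeWhile Q (P @ a # b # R)) = Suc (length P) then 1 else 0)"
proof (cases "\<forall>x\<in>set P. Q x")
  case True
  then show ?thesis by (cases "Q a"; cases "Q b") (simp_all add: takeWhile_append)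
next
  case False
  have lt: "length (takeWhile Q P) < length P"
  proof (rule ccontr)
    assume "\<not> ?thesis"
    then have "length (takeWhile Q P) = length P" using length_takeWhile_le[of Q P] by simp
    then have "takeWhile Q P = P" using takeWhile_eq_take[of Q P] by simp
    then have "\<forall>x\<in>set P. Q x" by (metis set_takeWhileD)
    then show False using False by blast
  qed
  show ?thesis using False lt by (simp add: takeWhile_append)
qed

lemma tw_nth_iff:
  assumes "i < length M"
  shows "(\<not> Q (M ! i) \<and> (\<forall>j<i. Q (M ! j))) \<longleftrightarrow> length (takeWhile Q M) = i"
proof
  assume h: "\<not> Q (M ! i) \<and> (\<forall>j<i. Q (M ! j))"
  have "takeWhile Q M = take i M" by (rule takeWhile_eq_take_P_nth) (use h in auto)
  then show "length (takeWhile Q M) = i" using assms by simp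
next
  assume h: "length (takeWhile Q M) = i"
  have "\<not> Q (M ! i)" using nth_length_takeWhile[of Q M] h assms by simp
  moreover have "\<forall>j<i. Q (M ! j)"
  proof (intro allI impI)
    fix j assume "j < i"
    then have jl: "j < length (takeWhile Q M)" using h by simp
    then have "takeWhile Q M ! j = M ! j" "takeWhile Q M ! j \<in> set (takeWhile Q M)"
      using takeWhile_nth[of j Q M] nth_mem[OF jl] by auto
    then show "Q (M ! j)" by (metis set_takeWhileD)
  qed
  ultimately show "\<not> Q (M ! i) \<and> (\<forall>j<i. Q (M ! j))" by blast
qed

lemma first_alive_iff:
  assumes "1 \<le> l" "l - 1 < length (filter (\<lambda>e. e \<in> bt_leaves d) S)"
  shows "bt_first_alive d S x l \<longleftrightarrow> fa d x (filter (\<lambda>e. e \<in> bt_leaves d) S) = l - 1"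
  unfolding bt_first_alive_def fa_def Let_def
  using tw_nth_iff[OF assms(2), of "\<lambda>v. \<not> bt_alive d x v"] by simp

lemma weight_pos: "0 < p \<Longrightarrow> p < 1 \<Longrightarrow> 0 < bt_weight d p x"
  unfolding bt_weight_def by (rule prod_pos) auto

lemma finite_edges: "finite (bt_edges d)" by (simp add: bt_edges_def)

lemma finite_inputs: "finite (bt_inputs d)"
  unfolding bt_inputs_def by (rule finite_PiE) (simp_all add: finite_edges)

lemma F_nonempty:
  assumes "d \<ge> 1" shows "\<exists>x\<in>bt_inputs d. bt_f d x"
proof -
  define x0 where "x0 = (\<lambda>e. if e \<in> bt_edges d then True else undefined)"
  have "x0 \<in> bt_inputs d" unfolding x0_def bt_inputs_def by (simp add: PiE_iff extensional_def)
  moreover have "(2::nat)^d \<in> bt_leaves d" by (simp add: bt_leaves_def)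
  moreover have "bt_alive d x0 (2^d)" unfolding bt_alive_def
  proof (intro allI impI)
    fix k assume "k < d"
    then have "(2::nat)^d div 2^k \<in> bt_edges d" using path_edge[of "2^d" d k] by (simp add: bt_leaves_def)
    then show "x0 (2^d div 2^k)" by (simp add: x0_def)
  qed
  ultimately show ?thesis unfolding bt_f_def by blast
qed



lemma q_sum:
  "bt_q d p S l = (\<Sum>x\<in>{x\<in>bt_inputs d. bt_f d x}. if bt_first_alive d S x l then bt_weight d p x else 0)
      / (\<Sum>x\<in>{x\<in>bt_inputs d. bt_f d x}. bt_weight d p x)"
proof -
  have "{x\<in>bt_inputs d. bt_f d x \<and> bt_first_alive d S x l} = {x\<in>{x\<in>bt_inputs d. bt_f d x}. bt_first_alive d S x l}"
    by auto
  moreover have "finite {x\<in>bt_inputs d. bt_f d x}" using finite_inputs by simp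
  then have "(\<Sum>x\<in>{x\<in>{x\<in>bt_inputs d. bt_f d x}. bt_first_alive d S x l}. bt_weight d p x)
     = (\<Sum>x\<in>{x\<in>bt_inputs d. bt_f d x}. if bt_first_alive d S x l then bt_weight d p x else 0)"
    by (rule sum.inter_filter)
  ultimately show ?thesis unfolding bt_q_def by simp
qed

lemma part2:
  assumes d: "d \<ge> 1" and p: "0 < p" "p < 1" and S: "bt_strategy d S" "bt_leaf_last d S"
    and mn: "\<forall>S'. bt_strategy d S' \<longrightarrow> bt_cond_cost d p S \<le> bt_cond_cost d p S'"
    and l: "l \<in> {1..<2^d}"
  shows "bt_q d p S (l + 1) \<le> bt_q d p S l"
proof -
  define F where "F = {x\<in>bt_inputs d. bt_f d x}"
  define w where "w = bt_weight d p"
  define Z where "Z = (\<Sum>x\<in>F. w x)"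
  have finF: "finite F" using finite_inputs by (simp add: F_def)
  have Fne: "F \<noteq> {}" using F_nonempty[OF d] by (auto simp: F_def)
  have wpos: "\<And>x. 0 < w x" using weight_pos[OF p] by (simp add: w_def)
  have Zpos: "0 < Z" unfolding Z_def using finF Fne wpos by (simp add: sum_pos)
  define P where "P = (\<lambda>e. e \<in> bt_leaves d)"
  define Is where "Is = filter (\<lambda>e. e \<notin> bt_leaves d) S"
  define Ls where "Ls = filter P S"
  have Sdec: "S = Is @ Ls" using leaf_last_decomp[OF S(2)] by (simp add: Is_def Ls_def P_def)
  have setS: "set S = bt_edges d" and dS: "distinct S" using S(1) by (auto simp: bt_strategy_def)
  have setIs: "set Is = bt_edges d - bt_leaves d" using setS by (auto simp: Is_def)
  have setLs: "set Ls = bt_leaves d" using setS leaves_sub[OF d] by (auto simp: Ls_def P_def)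
  have dLs: "distinct Ls" using dS by (simp add: Ls_def)
  have "card (bt_leaves d) = 2^d" by (simp add: bt_leaves_def)
  then have lenLs: "length Ls = 2^d" using distinct_card[OF dLs] setLs by simp
  define i where "i = l - 1"
  have il: "Suc i = l" "Suc i < length Ls" using l lenLs by (auto simp: i_def)
  define a where "a = Ls ! i"
  define b where "b = Ls ! Suc i"
  define P0 where "P0 = take i Ls"
  define R where "R = drop (Suc (Suc i)) Ls"
  have d1: "drop (Suc i) Ls = b # R" using il by (simp add: b_def R_def Cons_nth_drop_Suc)
  have "i < length Ls" using il(2) by simp
  then have d0: "drop i Ls = a # drop (Suc i) Ls" unfolding a_def by (rule Cons_nth_drop_Suc[symmetric])
  have Lsdec: "Ls = P0 @ a # b # R" using d0 d1 by (metis append_take_drop_id P0_def)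
  have lenP0: "length P0 = i" using il by (simp add: P0_def)
  define Ls' where "Ls' = P0 @ b # a # R"
  have setLs': "set Ls' = set Ls" using Lsdec by (auto simp: Ls'_def)
  have dLs': "distinct Ls'" using dLs Lsdec by (auto simp: Ls'_def)
  define S' where "S' = Is @ Ls'"
  have S'strat: "bt_strategy d S'"
    using dS Sdec setLs' dLs' setS by (auto simp: bt_strategy_def S'_def)
  have Lsl: "set Ls \<subseteq> bt_leaves d" "set Ls' \<subseteq> bt_leaves d" using setLs setLs' by auto
  have cS: "\<And>x. x \<in> F \<Longrightarrow> bt_costL d S x = fa d x Ls + 1"
    using costL_ll[OF S(1) Sdec setIs Lsl(1) _ _ d] by (auto simp: F_def)
  have cS': "\<And>x. x \<in> F \<Longrightarrow> bt_costL d S' x = fa d x Ls' + 1"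
    using costL_ll[OF S'strat S'_def setIs Lsl(2) _ _ d] by (auto simp: F_def)
  have ccS: "bt_cond_cost d p S = (\<Sum>x\<in>F. w x * (real (fa d x Ls) + 1)) / Z"
    unfolding bt_cond_cost_def F_def[symmetric] w_def[symmetric] Z_def
    by (intro arg_cong2[where f="(/)"] sum.cong refl) (simp add: cS)
  have ccS': "bt_cond_cost d p S' = (\<Sum>x\<in>F. w x * (real (fa d x Ls') + 1)) / Z"
    unfolding bt_cond_cost_def F_def[symmetric] w_def[symmetric] Z_def
    by (intro arg_cong2[where f="(/)"] sum.cong refl) (simp add: cS')
  define A where "A = (\<lambda>x. if fa d x Ls = i \<and> \<not> bt_alive d x b then 1 else (0::real))"
  define B where "B = (\<lambda>x. if fa d x Ls = Suc i then 1 else (0::real))"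
  have pw: "\<And>x. real (fa d x Ls') = real (fa d x Ls) + A x - B x"
    unfolding fa_def Ls'_def A_def B_def
    using swap_tw[of "\<lambda>v. \<not> bt_alive d x v" P0 b a R for x] Lsdec lenP0 by simp
  have "bt_cond_cost d p S \<le> bt_cond_cost d p S'" using mn S'strat by blast
  then have le1: "(\<Sum>x\<in>F. w x * (real (fa d x Ls) + 1)) \<le> (\<Sum>x\<in>F. w x * (real (fa d x Ls') + 1))"
    using Zpos by (simp add: ccS ccS' divide_le_cancel)
  also have "\<dots> = (\<Sum>x\<in>F. w x * (real (fa d x Ls) + 1)) + (\<Sum>x\<in>F. w x * A x) - (\<Sum>x\<in>F. w x * B x)"
    by (simp add: pw algebra_simps sum.distrib sum_subtractf)
  finally have BA: "(\<Sum>x\<in>F. w x * B x) \<le> (\<Sum>x\<in>F. w x * A x)" by simp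
  have fa_l: "\<And>x. bt_first_alive d S x l \<longleftrightarrow> fa d x Ls = i"
    using first_alive_iff[where l=l and S=S and d=d] il l by (simp add: Ls_def P_def i_def)
  have fa_l1: "\<And>x. bt_first_alive d S x (Suc l) \<longleftrightarrow> fa d x Ls = Suc i"
    using first_alive_iff[where l="l+1" and S=S and d=d] il by (simp add: Ls_def P_def)
  have "(\<Sum>x\<in>F. if bt_first_alive d S x (l+1) then w x else 0) = (\<Sum>x\<in>F. w x * B x)"
    by (rule sum.cong) (simp_all only: Suc_eq_plus1[symmetric] fa_l1 B_def, simp)
  also have "\<dots> \<le> (\<Sum>x\<in>F. w x * A x)" by (rule BA)
  also have "\<dots> \<le> (\<Sum>x\<in>F. if bt_first_alive d S x l then w x else 0)"
    by (rule sum_mono) (use wpos in \<open>auto simp: A_def fa_l less_imp_le\<close>)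
  finally have num: "(\<Sum>x\<in>F. if bt_first_alive d S x (l+1) then w x else 0)
       \<le> (\<Sum>x\<in>F. if bt_first_alive d S x l then w x else 0)" .
  show ?thesis unfolding q_sum F_def[symmetric] w_def[symmetric] Z_def[symmetric]
    using num Zpos by (simp add: divide_right_mono)
qed



lemma part1:
  assumes d: "d \<ge> 1" and p: "0 < p" "p < 1"
  shows "\<exists>S. bt_strategy d S \<and> bt_leaf_last d S \<and>
            (\<forall>S'. bt_strategy d S' \<longrightarrow> bt_cond_cost d p S \<le> bt_cond_cost d p S')"
proof -
  define F where "F = {x\<in>bt_inputs d. bt_f d x}"
  define w where "w = bt_weight d p"
  define Z where "Z = (\<Sum>x\<in>F. w x)"
  have finF: "finite F" using finite_inputs by (simp add: F_def)
  have Fne: "F \<noteq> {}" using F_nonempty[OF d] by (auto simp: F_def)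
  have wpos: "\<And>x. 0 < w x" using weight_pos[OF p] by (simp add: w_def)
  have Zpos: "0 < Z" unfolding Z_def using finF Fne wpos by (simp add: sum_pos)
  define P where "P = (\<lambda>e. e \<in> bt_leaves d)"
  obtain Is0 where Is0: "set Is0 = bt_edges d - bt_leaves d" "distinct Is0"
    using finite_distinct_list[of "bt_edges d - bt_leaves d"] finite_edges by blast
  define mk where "mk = (\<lambda>S'. Is0 @ filter P S')"
  have mk: "bt_strategy d (mk S') \<and> bt_leaf_last d (mk S') \<and> bt_cond_cost d p (mk S') \<le> bt_cond_cost d p S'"
    if S': "bt_strategy d S'" for S'
  proof -
    have setS': "set S' = bt_edges d" "distinct S'" using S' by (auto simp: bt_strategy_def)
    have setf: "set (filter P S') = bt_leaves d" using setS' leaves_sub[OF d] by (auto simp: P_def)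
    have st: "bt_strategy d (mk S')" using Is0 setf setS' leaves_sub[OF d]
      by (auto simp: bt_strategy_def mk_def)
    have ll: "bt_leaf_last d (mk S')" unfolding mk_def
      by (rule leaf_last_app) (use Is0 setf in auto)
    have c: "\<And>x. x \<in> F \<Longrightarrow> bt_costL d (mk S') x = fa d x (filter P S') + 1"
      using costL_ll[OF st mk_def[THEN fun_cong, of S'] Is0(1) _ _ _ d] setf by (auto simp: F_def)
    have c2: "\<And>x. x \<in> F \<Longrightarrow> fa d x (filter P S') + 1 \<le> bt_costL d S' x"
      using costL_ge[OF S' _ _ d] by (auto simp: F_def P_def)
    have "(\<Sum>x\<in>F. w x * real (bt_costL d (mk S') x)) \<le> (\<Sum>x\<in>F. w x * real (bt_costL d S' x))"
    proof (rule sum_mono)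
      fix x assume x: "x \<in> F"
      have "real (bt_costL d (mk S') x) \<le> real (bt_costL d S' x)" using c[OF x] c2[OF x] by simp
      then show "w x * real (bt_costL d (mk S') x) \<le> w x * real (bt_costL d S' x)"
        using wpos[of x] by (simp add: mult_left_mono)
    qed
    then have "bt_cond_cost d p (mk S') \<le> bt_cond_cost d p S'"
      unfolding bt_cond_cost_def F_def[symmetric] w_def[symmetric] Z_def[symmetric]
      using Zpos by (simp add: divide_right_mono)
    with st ll show ?thesis by blast
  qed
  define SS where "SS = {S. bt_strategy d S \<and> bt_leaf_last d S}"
  have "SS \<subseteq> {xs. set xs \<subseteq> bt_edges d \<and> distinct xs}" by (auto simp: SS_def bt_strategy_def)
  then have finSS: "finite SS" using finite_subset_distinct[OF finite_edges] finite_subset by blast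
  obtain S0 where S0: "set S0 = bt_edges d" "distinct S0"
    using finite_distinct_list[OF finite_edges] by blast
  then have "bt_strategy d S0" by (simp add: bt_strategy_def)
  then have "mk S0 \<in> SS" using mk by (simp add: SS_def)
  then have SSne: "SS \<noteq> {}" by blast
  define c where "c = Min ((bt_cond_cost d p) ` SS)"
  have "c \<in> (bt_cond_cost d p) ` SS" unfolding c_def using finSS SSne by (intro Min_in) auto
  then obtain S where S: "S \<in> SS" "bt_cond_cost d p S = c" by blast
  have minS: "bt_cond_cost d p S \<le> bt_cond_cost d p S'" if "S' \<in> SS" for S'
  proof -
    have "c \<le> bt_cond_cost d p S'" unfolding c_def using finSS that by (intro Min_le) auto
    then show ?thesis using S(2) by simp
  qed
  show ?thesis
  proof (intro exI conjI allI impI)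
    show "bt_strategy d S" "bt_leaf_last d S" using S(1) by (auto simp: SS_def)
    fix S' assume S': "bt_strategy d S'"
    then have "mk S' \<in> SS" using mk by (simp add: SS_def)
    then have "bt_cond_cost d p S \<le> bt_cond_cost d p (mk S')" by (rule minS)
    also have "\<dots> \<le> bt_cond_cost d p S'" using mk[OF S'] by blast
    finally show "bt_cond_cost d p S \<le> bt_cond_cost d p S'" .
  qed
qed

theorem lemma3:
  fixes \<epsilon> :: real and d :: nat
  assumes "0 < \<epsilon>" "\<epsilon> < 1" "d \<ge> 1"
  defines "p \<equiv> (1 + \<epsilon>) / 2"
  shows "(\<exists>S. bt_strategy d S \<and> bt_leaf_last d S \<and>
            (\<forall>S'. bt_strategy d S' \<longrightarrow> bt_cond_cost d p S \<le> bt_cond_cost d p S'))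
       \<and> (\<forall>S. bt_strategy d S \<and> bt_leaf_last d S \<and>
            (\<forall>S'. bt_strategy d S' \<longrightarrow> bt_cond_cost d p S \<le> bt_cond_cost d p S')
            \<longrightarrow> (\<forall>l\<in>{1..<2^d}. bt_q d p S l \<ge> bt_q d p S (l + 1)))"
proof -
  have p: "0 < p" "p < 1" using assms(1,2) by (simp_all add: p_def)
  show ?thesis
    using part1[OF assms(3) p] part2[OF assms(3) p] by blast
qed

end
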